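(* Let $\rho\in L^1(\mathbb R^2)$, $\rho\ge0$, satisfy $\int_{\mathbb R^2}\rho\ln\rho\le C_0$, $\int_{\mathbb R^2}\rho=\beta$, $\int_{\mathbb R^2}|x|^2\rho\le C_0$, and define $u(x)=-\frac1{2\pi}\int_{\mathbb R^2}\ln|x-y|\rho(y)\,d^2y$ for $x\in\mathbb R^2$. Then there exist constants $C,R$ depending only on $C_0$ and $\beta$ such that $$\Big|u(x)+\frac{\beta}{2\pi}\ln|x|\Big|\le C\quad\text{for all }|x|>R.$$ *)

theory Defs
  imports "HOL-Analysis.Analysis"
begin

definition log_potential :: "(real^2 \<Rightarrow> real) \<Rightarrow> real^2 \<Rightarrow> real" where
  "log_potential \<rho> x = - (1 / (2 * pi)) * (\<integral>y. ln (norm (x - y)) * \<rho> y \<partial>lborel)"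

end

theory Submission
  imports Defs
begin


lemma ball_vol2: "r \<ge> 0 \<Longrightarrow> emeasure lborel (ball c r :: (real^2) set) = ennreal (pi * r^2)"
  using emeasure_ball[of r c] by (simp add: unit_ball_vol_2)

lemma young: fixes a b :: real assumes "a \<ge> 0" shows "a * b \<le> a * ln a - a + exp b"
proof (cases "a = 0")
  case True then show ?thesis by simp
next
  case False
  then have a: "a > 0" using assms by simp
  have "exp b = a * exp (b - ln a)" using a by (simp add: exp_diff)
  also have "\<dots> \<ge> a * (1 + (b - ln a))" using a exp_ge_add_one_self[of "b - ln a"]
    by (intro mult_left_mono) auto
  finally show ?thesis by (simp add: algebra_simps)
qed

lemma dyadic: fixes d :: real assumes "0 < d" "d < 1"
  shows "\<exists>n. (1/2)^(Suc n) \<le> d \<and> d < (1/2)^n"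
proof (rule ccontr)
  assume H: "\<not> ?thesis"
  have "d < (1/2)^n" for n
  proof (induction n)
    case 0 then show ?case using assms by simp
  next
    case (Suc n) then show ?case using H by (meson not_less)
  qed
  moreover obtain m where "(1/2::real)^m < d" using real_arch_pow_inv[of d "1/2"] assms by auto
  ultimately show False by (meson less_asym)
qed

lemma shell:
  fixes f :: "real^2 \<Rightarrow> ennreal" and z :: "real^2"
  assumes "\<And>y. f y \<le> (\<Sum>k. ennreal (c k) * indicator (ball z (r k)) y)" "\<And>k. 0 \<le> r k"
  shows "(\<integral>\<^sup>+y. f y \<partial>lborel) \<le> (\<Sum>k. ennreal (c k * (pi * r k ^ 2)))"
proof -
  have "(\<integral>\<^sup>+y. f y \<partial>lborel) \<le> (\<integral>\<^sup>+y. (\<Sum>k. ennreal (c k) * indicator (ball z (r k)) y) \<partial>lborel)"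
    by (intro nn_integral_mono assms)
  also have "\<dots> = (\<Sum>k. \<integral>\<^sup>+y. ennreal (c k) * indicator (ball z (r k)) y \<partial>lborel)"
    by (rule nn_integral_suminf) (intro borel_measurable_times_ennreal borel_measurable_const borel_measurable_indicator, simp)
  also have "\<dots> = (\<Sum>k. ennreal (c k) * emeasure lborel (ball z (r k)))"
    by (subst nn_integral_cmult_indicator) auto
  also have "\<dots> \<le> (\<Sum>k. ennreal (c k * (pi * r k ^ 2)))"
    using assms(2) by (intro suminf_le) (auto simp: ball_vol2 ennreal_mult'')
  finally show ?thesis .
qed


lemma term_le: fixes f :: "nat \<Rightarrow> ennreal" shows "f n \<le> (\<Sum>k. f k)"
  using sum_le_suminf[OF summableI, of "{n}" f] by simp


lemma h_bound:
  fixes x :: "real^2"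
  shows "(\<integral>\<^sup>+y. ennreal (indicator (ball x 1) y * (1 / norm (x - y))) \<partial>lborel) \<le> ennreal (4 * pi)"
proof -
  have pw: "ennreal (indicator (ball x 1) y * (1 / norm (x - y)))
      \<le> (\<Sum>k. ennreal (2 ^ Suc k) * indicator (ball x ((1/2) ^ k)) y)" for y
  proof (cases "y \<in> ball x 1 \<and> y \<noteq> x")
    case False
    then have "indicator (ball x 1) y * (1 / norm (x - y)) = (0::real)"
      by (cases "y \<in> ball x 1") auto
    then show ?thesis by (simp only: ennreal_0) (rule zero_le)
  next
    case True
    define d where "d = norm (x - y)"
    have d: "0 < d" "d < 1" using True by (auto simp: d_def dist_norm)
    obtain n where n: "(1/2)^(Suc n) \<le> d" "d < (1/2)^n" using dyadic[OF d] by blast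
    have "1 / d \<le> 1 / (1/2)^(Suc n)"
      using n d by (intro divide_left_mono) auto
    also have "\<dots> = 2 ^ Suc n" by (simp only: power_one_over) simp
    finally have le: "1 / d \<le> 2 ^ Suc n" .
    have yin: "y \<in> ball x ((1/2)^n)" using n by (simp add: dist_norm d_def)
    have "ennreal (indicator (ball x 1) y * (1 / norm (x - y))) = ennreal (1/d)"
      using True by (simp add: d_def)
    also have "\<dots> \<le> ennreal (2 ^ Suc n) * indicator (ball x ((1/2) ^ n)) y"
      using le yin by (simp only: indicator_simps mult_1_right) (rule ennreal_leI)
    also have "\<dots> \<le> (\<Sum>k. ennreal (2 ^ Suc k) * indicator (ball x ((1/2) ^ k)) y)"
      by (rule term_le)
    finally show ?thesis .
  qed
  have "(\<integral>\<^sup>+y. ennreal (indicator (ball x 1) y * (1 / norm (x - y))) \<partial>lborel)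
      \<le> (\<Sum>k. ennreal (2 ^ Suc k * (pi * ((1/2) ^ k) ^ 2)))"
    by (rule shell[OF pw]) simp
  also have "(\<Sum>k. ennreal (2 ^ Suc k * (pi * ((1/2::real) ^ k) ^ 2))) = (\<Sum>k. ennreal (2 * pi * (1/2) ^ k))"
  proof (intro arg_cong[where f=suminf] ext arg_cong[where f=ennreal])
    fix k :: nat
    have "(2::real)^k * (1/2)^k = 1" by (simp add: power_mult_distrib[symmetric])
    then show "2 ^ Suc k * (pi * ((1/2::real) ^ k) ^ 2) = 2 * pi * (1/2) ^ k"
      by (simp add: power2_eq_square algebra_simps)
  qed
  also have "(\<Sum>k. ennreal (2 * pi * (1/2) ^ k)) = ennreal (\<Sum>k. 2 * pi * (1/2) ^ k)"
    by (intro suminf_ennreal2) (auto intro!: summable_mult summable_geometric)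
  also have "(\<Sum>k. 2 * pi * (1/2::real) ^ k) = 4 * pi"
    by (subst suminf_mult) (auto simp: suminf_geometric)
  finally show ?thesis .
qed


lemma G_bound:
  "(\<integral>\<^sup>+y. ennreal (exp (-1 - (norm (y::real^2))\<^sup>2)) \<partial>lborel) \<le> ennreal (128 / 3 * pi)"
proof -
  have pw: "ennreal (exp (-1 - (norm y)\<^sup>2))
      \<le> (\<Sum>k. ennreal (2 / 16 ^ k) * indicator (ball (0::real^2) (2 ^ (k+2))) y)" for y
  proof -
    have "-1 - (norm y)\<^sup>2 \<le> 0" using zero_le_power2[of "norm y"] by linarith
    then have e1: "exp (-1 - (norm y)\<^sup>2) \<le> 1" by simp
    have e2: "exp (-1 - (norm y)\<^sup>2) \<le> 2 / norm y ^ 4" if "y \<noteq> 0"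
    proof -
      have "(norm y ^ 2)^2 / 2 \<le> 1 + norm y ^ 2 + (norm y ^ 2)^2 / 2" by simp
      also have "\<dots> \<le> exp (norm y ^ 2)" by (rule exp_lower_Taylor_quadratic) simp
      also have "\<dots> \<le> exp (1 + norm y ^ 2)" by simp
      finally have q1: "norm y ^ 4 / 2 \<le> exp (1 + norm y ^ 2)" by (simp add: power_mult[symmetric])
      have q2: "exp (-1 - (norm y)\<^sup>2) = 1 / exp (1 + norm y ^ 2)"
        using exp_minus[of "1 + (norm y)^2"] by (simp add: inverse_eq_divide)
      have q3: "0 < norm y ^ 4 / 2" using that by simp
      have "1 / exp (1 + norm y ^ 2) \<le> 1 / (norm y ^ 4 / 2)"
        using q1 q3 by (intro divide_left_mono) auto
      then have "exp (-1 - (norm y)\<^sup>2) \<le> 1 / (norm y ^ 4 / 2)" using q2 by simp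
      then show ?thesis by simp
    qed
    show ?thesis
    proof (cases "norm y < 2")
      case True
      have "ennreal (exp (-1 - (norm y)\<^sup>2)) \<le> ennreal (2 / 16 ^ 0) * indicator (ball (0::real^2) (2 ^ (0+2))) y"
      proof -
        have "norm y < 2 ^ (0+2)" using True by simp
        then have "y \<in> ball (0::real^2) (2 ^ (0+2))" by simp
        then show ?thesis using e1 by (simp only: indicator_simps mult_1_right power_0 div_by_1) (rule ennreal_leI, linarith)
      qed
      also have "\<dots> \<le> (\<Sum>k. ennreal (2 / 16 ^ k) * indicator (ball (0::real^2) (2 ^ (k+2))) y)"
        by (rule term_le)
      finally show ?thesis .
    next
      case False
      then have y0: "y \<noteq> 0" by auto
      have ny: "norm y \<ge> 2" using False by simp
      have d: "0 < 1 / norm y" "1 / norm y < 1" using ny by (auto simp: divide_less_eq)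
      obtain n where n: "(1/2)^(Suc n) \<le> 1 / norm y" "1 / norm y < (1/2)^n" using dyadic[OF d] by blast
      have a: "norm y \<le> 2 ^ Suc n" using le_imp_inverse_le[OF n(1)] ny
        by (simp add: power_one_over y0)
      have b: "2 ^ n < norm y" using less_imp_inverse_less[OF n(2)] ny
        by (simp add: power_one_over y0)
      have "(2::real)^Suc n < 2^(n+2)" by (intro power_strict_increasing) auto
      then have "norm y < 2^(n+2)" using a by linarith
      then have yin: "y \<in> ball 0 (2 ^ (n+2))" by simp
      have "((2::real) ^ n) ^ 4 \<le> norm y ^ 4" using b by (intro power_mono) auto
      moreover have "((2::real) ^ n) ^ 4 = 16 ^ n"
      proof -
        have "((2::real) ^ n) ^ 4 = (2^4) ^ n" by (metis mult.commute power_mult)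
        then show ?thesis by simp
      qed
      ultimately have "(16::real) ^ n \<le> norm y ^ 4" by simp
      then have "2 / norm y ^ 4 \<le> 2 / 16 ^ n" using y0 by (intro divide_left_mono) auto
      then have "exp (-1 - (norm y)\<^sup>2) \<le> 2 / 16 ^ n" using e2[OF y0] by linarith
      then have "ennreal (exp (-1 - (norm y)\<^sup>2)) \<le> ennreal (2 / 16 ^ n) * indicator (ball (0::real^2) (2 ^ (n+2))) y"
        using yin by (simp only: indicator_simps mult_1_right) (rule ennreal_leI)
      also have "\<dots> \<le> (\<Sum>k. ennreal (2 / 16 ^ k) * indicator (ball (0::real^2) (2 ^ (k+2))) y)"
        by (rule term_le)
      finally show ?thesis .
    qed
  qed
  have "(\<integral>\<^sup>+y. ennreal (exp (-1 - (norm (y::real^2))\<^sup>2)) \<partial>lborel)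
      \<le> (\<Sum>k. ennreal (2 / 16 ^ k * (pi * (2 ^ (k+2)) ^ 2)))"
    by (rule shell[OF pw]) simp
  also have "(\<Sum>k. ennreal (2 / 16 ^ k * (pi * (2 ^ (k+2)) ^ 2))) = (\<Sum>k. ennreal (32 * pi * (1/4::real) ^ k))"
  proof (intro arg_cong[where f=suminf] ext arg_cong[where f=ennreal])
    fix k :: nat
    have "(16::real)^k = 4^k * 4^k" by (simp add: power_mult_distrib[symmetric])
    moreover have "((2::real) ^ (k+2)) ^ 2 = 16 * 4^k"
    proof -
      have "((2::real) ^ (k+2)) ^ 2 = (2^2) ^ (k+2)" by (metis mult.commute power_mult)
      then show ?thesis by (simp add: power_add)
    qed
    moreover have "(4::real)^k > 0" by simp
    ultimately show "2 / 16 ^ k * (pi * (2 ^ (k+2)) ^ 2) = 32 * pi * (1/4::real) ^ k"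
      by (simp add: power_one_over field_simps)
  qed
  also have "(\<Sum>k. ennreal (32 * pi * (1/4) ^ k)) = ennreal (\<Sum>k. 32 * pi * (1/4) ^ k)"
    by (intro suminf_ennreal2) (auto intro!: summable_mult summable_geometric)
  also have "(\<Sum>k. 32 * pi * (1/4::real) ^ k) = 128 / 3 * pi"
    by (subst suminf_mult) (auto simp: suminf_geometric)
  finally show ?thesis .
qed



lemma pointwise:
  fixes x y :: "real^2" and a :: real
  assumes x1: "norm x \<ge> 1" and a0: "a \<ge> 0"
  shows "\<bar>(ln (norm (x - y)) - ln (norm x)) * a\<bar> \<le> 2 * (a * (norm y)\<^sup>2) + a + a * ln a
     + exp (-1 - (norm y)\<^sup>2) + indicator (ball x 1) y * (1 / norm (x - y))"
proof -
  define d where "d = norm (x - y)"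
  define nl where "nl = (if 0 < d \<and> d < 1 then - ln d else 0)"
  define hh where "hh = indicator (ball x 1) y * (1 / norm (x - y))"
  have nx: "norm x > 0" using x1 by linarith
  have dtri: "d \<le> norm x + norm y" unfolding d_def by (rule norm_triangle_ineq4)
  have xtri: "norm x \<le> d + norm y" unfolding d_def
    by (metis add.commute diff_add_cancel norm_triangle_ineq)
  have lnx: "ln (norm x) \<le> norm x - 1" using nx by (rule ln_le_minus_one)
  have lnx0: "ln (norm x) \<ge> 0" using x1 by simp
  have ny0: "norm y \<ge> 0" by simp
  have A: "ln d - ln (norm x) \<le> norm y"
  proof (cases "d = 0")
    case True then have "ln d = 0" by simp
    then show ?thesis using lnx0 ny0 by linarith
  next
    case False
    then have dp: "d > 0" unfolding d_def by simp
    have "ln d \<le> ln (norm x + norm y)" using dp dtri by simp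
    also have "ln (norm x + norm y) = ln (norm x) + ln ((norm x + norm y) / norm x)"
      using ln_div[of "norm x + norm y" "norm x"] nx ny0 by simp
    also have "ln ((norm x + norm y) / norm x) \<le> (norm x + norm y) / norm x - 1"
      using nx by (intro ln_le_minus_one) (simp add: add_pos_nonneg)
    also have "(norm x + norm y) / norm x - 1 = norm y / norm x" using nx by (simp add: field_simps)
    also have "norm y / norm x \<le> norm y" using x1 by (simp add: divide_le_eq mult_le_cancel_left1)
    finally show ?thesis by simp
  qed
  have B: "ln d - ln (norm x) \<ge> - norm y - nl"
  proof (cases "d = 0")
    case True then show ?thesis using lnx x1 nl_def d_def by (simp add: True)
  next
    case False
    then have dp: "d > 0" unfolding d_def by simp
    show ?thesis
    proof (cases "d < 1")
      case True
      have "ln (norm x) \<le> norm y" using lnx xtri True by linarith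
      then show ?thesis using True dp by (simp add: nl_def)
    next
      case False
      have "ln (norm x) - ln d = ln (norm x / d)" using dp nx by (simp add: ln_div)
      also have "\<dots> \<le> norm x / d - 1" using dp nx by (intro ln_le_minus_one) simp
      also have "norm x / d - 1 \<le> norm y / d" using xtri dp by (simp add: field_simps) (use mult_left_mono[OF xtri, of d] in \<open>simp add: algebra_simps\<close>)
      also have "norm y / d \<le> norm y / 1" using False ny0 by (intro divide_left_mono) auto
      finally show ?thesis using False by (simp add: nl_def)
    qed
  qed
  have nl0: "nl \<ge> 0" unfolding nl_def by (auto intro!: ln_le_zero_iff[THEN iffD2] less_imp_le simp del: ln_le_zero_iff)
  have hh0: "hh \<ge> 0" unfolding hh_def by simp
  have L: "\<bar>ln d - ln (norm x)\<bar> \<le> norm y + nl" using A B nl0 by linarith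
  have "\<bar>(ln d - ln (norm x)) * a\<bar> = \<bar>ln d - ln (norm x)\<bar> * a" using a0 by (simp add: abs_mult)
  also have "\<dots> \<le> (norm y + nl) * a" using L a0 by (rule mult_right_mono)
  also have "\<dots> = a * norm y + a * nl" by (simp add: algebra_simps)
  finally have S1: "\<bar>(ln d - ln (norm x)) * a\<bar> \<le> a * norm y + a * nl" .
  have "0 \<le> (norm y - 1/2)\<^sup>2" by simp
  then have ny1: "norm y \<le> 1 + (norm y)\<^sup>2" by (simp add: power2_eq_square algebra_simps)
  have S2: "a * norm y \<le> a + a * (norm y)\<^sup>2"
    using mult_left_mono[OF ny1 a0] by (simp add: algebra_simps)
  have S3: "a * nl \<le> max 0 (a * ln a) + hh"
  proof (cases "0 < d \<and> d < 1")
    case True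
    have "a * (- ln d) \<le> a * ln a - a + exp (- ln d)" using a0 by (rule young)
    also have "exp (- ln d) = 1 / d" using True by (simp add: exp_minus inverse_eq_divide)
    also have "1 / d = hh" using True unfolding hh_def d_def by (simp add: dist_norm)
    finally show ?thesis using True a0 unfolding nl_def by auto
  next
    case False then have "nl = 0" unfolding nl_def by simp
    then show ?thesis using hh0 by simp
  qed
  have "a * (-1 - (norm y)\<^sup>2) \<le> a * ln a - a + exp (-1 - (norm y)\<^sup>2)" using a0 by (rule young)
  then have S4: "max 0 (a * ln a) \<le> a * ln a + a * (norm y)\<^sup>2 + exp (-1 - (norm y)\<^sup>2)"
    using a0 by (auto simp: algebra_simps intro!: add_nonneg_nonneg mult_nonneg_nonneg)
  show ?thesis using S1 S2 S3 S4 unfolding d_def hh_def by linarith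
qed



lemma int_helper:
  fixes f :: "real^2 \<Rightarrow> real"
  assumes "f \<in> borel_measurable lborel" "\<And>y. 0 \<le> f y"
    "(\<integral>\<^sup>+y. ennreal (f y) \<partial>lborel) \<le> ennreal B" "0 \<le> B"
  shows "integrable lborel f \<and> integral\<^sup>L lborel f \<le> B"
proof
  have fin: "(\<integral>\<^sup>+y. ennreal (f y) \<partial>lborel) < \<infinity>"
    using assms(3) by (simp add: le_less_trans)
  show "integrable lborel f" using assms(1,2) fin by (intro integrableI_nonneg) auto
  have "integral\<^sup>L lborel f = enn2real (\<integral>\<^sup>+y. ennreal (f y) \<partial>lborel)"
    using assms(1,2) by (intro integral_eq_nn_integral) auto
  also have "\<dots> \<le> B" using assms(3,4) by (intro enn2real_leI)
  finally show "integral\<^sup>L lborel f \<le> B" .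
qed

theorem lemma5:
  fixes C\<^sub>0 \<beta> :: real
  shows "\<exists>C R. \<forall>\<rho> :: real^2 \<Rightarrow> real.
      integrable lborel \<rho> \<and> (\<forall>y. \<rho> y \<ge> 0)
      \<and> integrable lborel (\<lambda>y. \<rho> y * ln (\<rho> y))
      \<and> (\<integral>y. \<rho> y * ln (\<rho> y) \<partial>lborel) \<le> C\<^sub>0
      \<and> (\<integral>y. \<rho> y \<partial>lborel) = \<beta>
      \<and> (\<integral>\<^sup>+ y. ennreal ((norm y)\<^sup>2 * \<rho> y) \<partial>lborel) \<le> ennreal C\<^sub>0
      \<longrightarrow> (\<forall>x. norm x > R \<longrightarrow>
             \<bar>log_potential \<rho> x + \<beta> / (2 * pi) * ln (norm x)\<bar> \<le> C)"
proof -
  define K where "K = 2 * max C\<^sub>0 0 + \<beta> + C\<^sub>0 + 128 / 3 * pi + 4 * pi"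
  show ?thesis
  proof (rule exI[of _ "K / (2 * pi)"], rule exI[of _ 1], intro allI impI)
    fix \<rho> :: "real^2 \<Rightarrow> real"
    assume H: "integrable lborel \<rho> \<and> (\<forall>y. \<rho> y \<ge> 0)
      \<and> integrable lborel (\<lambda>y. \<rho> y * ln (\<rho> y))
      \<and> (\<integral>y. \<rho> y * ln (\<rho> y) \<partial>lborel) \<le> C\<^sub>0
      \<and> (\<integral>y. \<rho> y \<partial>lborel) = \<beta>
      \<and> (\<integral>\<^sup>+ y. ennreal ((norm y)\<^sup>2 * \<rho> y) \<partial>lborel) \<le> ennreal C\<^sub>0"
    fix x :: "real^2"
    assume x1: "norm x > 1"
    have ir: "integrable lborel \<rho>" and r0: "\<And>y. \<rho> y \<ge> 0"
      and ie: "integrable lborel (\<lambda>y. \<rho> y * ln (\<rho> y))"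
      and ent: "(\<integral>y. \<rho> y * ln (\<rho> y) \<partial>lborel) \<le> C\<^sub>0"
      and mass: "(\<integral>y. \<rho> y \<partial>lborel) = \<beta>"
      and mom: "(\<integral>\<^sup>+ y. ennreal ((norm y)\<^sup>2 * \<rho> y) \<partial>lborel) \<le> ennreal C\<^sub>0"
      using H by auto
    have rm: "\<rho> \<in> borel_measurable lborel" using ir by (rule borel_measurable_integrable)
    have "(\<integral>\<^sup>+ y. ennreal (\<rho> y * (norm y)\<^sup>2) \<partial>lborel) \<le> ennreal (max C\<^sub>0 0)"
      using mom by (simp add: mult.commute) (metis ennreal_leI max.cobounded1 order_trans)
    then have sq: "integrable lborel (\<lambda>y. \<rho> y * (norm y)\<^sup>2) \<and> (\<integral>y. \<rho> y * (norm y)\<^sup>2 \<partial>lborel) \<le> max C\<^sub>0 0"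
      using rm r0 by (intro int_helper) (auto intro!: borel_measurable_times)
    have G: "integrable lborel (\<lambda>y::real^2. exp (-1 - (norm y)\<^sup>2)) \<and> (\<integral>y. exp (-1 - (norm (y::real^2))\<^sup>2) \<partial>lborel) \<le> 128 / 3 * pi"
      using G_bound by (intro int_helper) auto
    have hm: "(\<lambda>y. indicator (ball x 1) y * (1 / norm (x - y))) \<in> borel_measurable lborel"
      by (intro borel_measurable_times borel_measurable_indicator borel_measurable_divide) auto
    have h: "integrable lborel (\<lambda>y. indicator (ball x 1) y * (1 / norm (x - y))) \<and> (\<integral>y. indicator (ball x 1) y * (1 / norm (x - y)) \<partial>lborel) \<le> 4 * pi"
      using h_bound[of x] hm by (intro int_helper) auto
    define F where "F y = 2 * (\<rho> y * (norm y)\<^sup>2) + \<rho> y + \<rho> y * ln (\<rho> y)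
     + exp (-1 - (norm y)\<^sup>2) + indicator (ball x 1) y * (1 / norm (x - y))" for y
    have iF: "integrable lborel F" unfolding F_def
      using sq G h ir ie by (intro Bochner_Integration.integrable_add Bochner_Integration.integrable_mult_right) auto
    have "integral\<^sup>L lborel F = 2 * (\<integral>y. \<rho> y * (norm y)\<^sup>2 \<partial>lborel) + (\<integral>y. \<rho> y \<partial>lborel)
       + (\<integral>y. \<rho> y * ln (\<rho> y) \<partial>lborel) + (\<integral>y. exp (-1 - (norm (y::real^2))\<^sup>2) \<partial>lborel)
       + (\<integral>y. indicator (ball x 1) y * (1 / norm (x - y)) \<partial>lborel)"
      unfolding F_def using sq G h ir ie
      by (simp add: Bochner_Integration.integral_add Bochner_Integration.integrable_add Bochner_Integration.integrable_mult_right)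
    then have FK: "integral\<^sup>L lborel F \<le> K" unfolding K_def using sq G h ent mass by linarith
    define Lf where "Lf y = (ln (norm (x - y)) - ln (norm x)) * \<rho> y" for y
    have Lm: "Lf \<in> borel_measurable lborel" unfolding Lf_def using rm by measurable
    have Lb: "\<bar>Lf y\<bar> \<le> F y" for y
      unfolding Lf_def F_def using pointwise[of x "\<rho> y" y] x1 r0[of y] by simp
    have iL: "integrable lborel Lf"
    proof (rule Bochner_Integration.integrable_bound[OF iF Lm], intro AE_I2)
      fix y show "norm (Lf y) \<le> norm (F y)"
        using Lb[of y] abs_ge_self[of "F y"] by simp
    qed
    have absL: "\<bar>integral\<^sup>L lborel Lf\<bar> \<le> K"
      using integral_abs_bound_integral[OF iL iF] Lb FK by force
    have eq: "(\<lambda>y. ln (norm (x - y)) * \<rho> y) = (\<lambda>y. Lf y + ln (norm x) * \<rho> y)"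
      unfolding Lf_def by (auto simp: algebra_simps)
    have "(\<integral>y. ln (norm (x - y)) * \<rho> y \<partial>lborel) = integral\<^sup>L lborel Lf + ln (norm x) * \<beta>"
      unfolding eq using iL ir mass by (simp add: Bochner_Integration.integral_add)
    then have "log_potential \<rho> x + \<beta> / (2 * pi) * ln (norm x) = - integral\<^sup>L lborel Lf / (2 * pi)"
      unfolding log_potential_def by (simp add: field_simps)
    then show "\<bar>log_potential \<rho> x + \<beta> / (2 * pi) * ln (norm x)\<bar> \<le> K / (2 * pi)"
      using absL by (simp add: divide_right_mono)
  qed
qed

end
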